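(* For every polynomial $f(\mathbf{x}) \in \mathbb{C}[x_1,\ldots,x_n]$ of degree $d$, we have $\mathrm{commRO}(f) \leq (d+1)^2 \cdot \mathrm{DPD}(f)$.
   Context: For $f \in \mathbb{C}[x_1,\ldots,x_n]$, the dimension of partial derivatives is $\mathrm{DPD}(f) := \dim_{\mathbb{C}} \mathrm{span}_{\mathbb{C}}\{\partial_{\mathbf{e}} f : \mathbf{e} \in \mathbb{N}^n\}$, where $\partial_{\mathbf{e}} f$ is the partial derivative of $f$ with respect to the monomial $x_1^{e_1}\cdots x_n^{e_n}$ (so $\mathbf{e}=\mathbf{0}$ gives $f$ itself). A read-once oblivious ABP (ROABP) of width $w$ computing an $n$-variate polynomial $f$ of individual degree at most $d$ consists of a permutation $\sigma$ of $[n]$, matrices $A_{j,k} \in \mathbb{C}^{w\times w}$ for $j\in[n]$, $0\le k\le d$, and vectors $\mathbf{u},\mathbf{v}\in\mathbb{C}^w$ such that $f(\mathbf{x}) = \mathbf{u}^{T} M_{\sigma(1)}(x_{\sigma(1)}) \cdots M_{\sigma(n)}(x_{\sigma(n)}) \mathbf{v}$, where $M_j(x_j) = \sum_{k=0}^{d} A_{j,k} x_j^k$. The $A_{j,k}$ are its coefficient matrices. A commutative ROABP is an ROABP whose coefficient matrices all pairwise commute. $\mathrm{commRO}(f)$ denotes the smallest $w$ such that some width-$w$ commutative ROABP computes $f$. *)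

theory Defs
  imports Complex_Main "HOL-Library.Function_Algebras" "Jordan_Normal_Form.Matrix"
begin

text \<open>An n-variate polynomial over the complex numbers is represented by its coefficient
  function c, mapping an exponent vector e (a function nat to nat; only indices below n
  are relevant) to the coefficient of the monomial x_0^(e 0) ... x_(n-1)^(e (n-1)).\<close>

definition is_mpoly :: "nat \<Rightarrow> ((nat \<Rightarrow> nat) \<Rightarrow> complex) \<Rightarrow> bool" where
  "is_mpoly n c \<longleftrightarrow> finite {e. c e \<noteq> 0} \<and> (\<forall>e. c e \<noteq> 0 \<longrightarrow> (\<forall>i\<ge>n. e i = 0))"

definition mpoly_eval :: "nat \<Rightarrow> ((nat \<Rightarrow> nat) \<Rightarrow> complex) \<Rightarrow> (nat \<Rightarrow> complex) \<Rightarrow> complex" where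
  "mpoly_eval n c x = (\<Sum>e\<in>{e. c e \<noteq> 0}. c e * (\<Prod>i<n. x i ^ e i))"

text \<open>Total degree (the zero polynomial gets degree 0).\<close>
definition total_degree :: "nat \<Rightarrow> ((nat \<Rightarrow> nat) \<Rightarrow> complex) \<Rightarrow> nat" where
  "total_degree n c = Max (insert 0 {(\<Sum>i<n. e i) | e. c e \<noteq> 0})"

text \<open>Partial derivative with respect to the monomial x^e: the coefficient of x^m in
  the derivative is c (m + e) times prod_i (m_i + e_i)! / m_i!.\<close>
definition mpoly_partial :: "nat \<Rightarrow> (nat \<Rightarrow> nat) \<Rightarrow> ((nat \<Rightarrow> nat) \<Rightarrow> complex) \<Rightarrow> ((nat \<Rightarrow> nat) \<Rightarrow> complex)" where
  "mpoly_partial n e c = (\<lambda>m. c (\<lambda>i. m i + e i) *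
      (\<Prod>i<n. of_nat (fact (m i + e i)) / of_nat (fact (m i))))"

definition cscale :: "complex \<Rightarrow> ((nat \<Rightarrow> nat) \<Rightarrow> complex) \<Rightarrow> ((nat \<Rightarrow> nat) \<Rightarrow> complex)" where
  "cscale a c = (\<lambda>m. a * c m)"

definition DPD :: "nat \<Rightarrow> ((nat \<Rightarrow> nat) \<Rightarrow> complex) \<Rightarrow> nat" where
  "DPD n c = vector_space.dim cscale
     {mpoly_partial n e c | e. \<forall>i\<ge>n. e i = 0}"

definition roabp_layer :: "nat \<Rightarrow> nat \<Rightarrow> (nat \<Rightarrow> nat \<Rightarrow> complex mat) \<Rightarrow> nat \<Rightarrow> complex \<Rightarrow> complex mat" where
  "roabp_layer w D A j t = mat w w (\<lambda>(a, b). \<Sum>k\<le>D. (A j k $$ (a, b)) * t ^ k)"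

definition roabp_value :: "nat \<Rightarrow> nat \<Rightarrow> nat \<Rightarrow> (nat \<Rightarrow> nat) \<Rightarrow> (nat \<Rightarrow> nat \<Rightarrow> complex mat)
     \<Rightarrow> complex vec \<Rightarrow> complex vec \<Rightarrow> (nat \<Rightarrow> complex) \<Rightarrow> complex" where
  "roabp_value n w D \<sigma> A u v x =
     u \<bullet> (foldr (*) [roabp_layer w D A (\<sigma> i) (x (\<sigma> i)). i \<leftarrow> [0..<n]] (1\<^sub>m w) *\<^sub>v v)"

definition comm_roabp_computes :: "nat \<Rightarrow> nat \<Rightarrow> ((nat \<Rightarrow> nat) \<Rightarrow> complex) \<Rightarrow> bool" where
  "comm_roabp_computes n w c \<longleftrightarrow>
     (\<exists>D \<sigma> A u v.
        \<sigma> permutes {0..<n} \<and>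
        (\<forall>j<n. \<forall>k\<le>D. A j k \<in> carrier_mat w w) \<and>
        u \<in> carrier_vec w \<and> v \<in> carrier_vec w \<and>
        (\<forall>j<n. \<forall>k\<le>D. \<forall>j'<n. \<forall>k'\<le>D. A j k * A j' k' = A j' k' * A j k) \<and>
        (\<forall>x. mpoly_eval n c x = roabp_value n w D \<sigma> A u v x))"

definition commRO :: "nat \<Rightarrow> ((nat \<Rightarrow> nat) \<Rightarrow> complex) \<Rightarrow> nat" where
  "commRO n c = (LEAST w. comm_roabp_computes n w c)"

end

theory Submission
  imports Defs
begin


lemma sum_fun_app: "(sum f A) x = (\<Sum>a\<in>A. f a x)"
  by (induction A rule: infinite_finite_induct) auto

definition dlt :: "nat \<Rightarrow> nat \<Rightarrow> nat \<Rightarrow> nat" where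
  "dlt j k = (\<lambda>i. if i = j then k else 0)"

definition Tj :: "nat \<Rightarrow> nat \<Rightarrow> nat \<Rightarrow> complex \<Rightarrow> ((nat \<Rightarrow> nat) \<Rightarrow> complex) \<Rightarrow> ((nat \<Rightarrow> nat) \<Rightarrow> complex)" where
  "Tj n D j t g = (\<lambda>m. \<Sum>k\<le>D. (t ^ k / fact k) * mpoly_partial n (dlt j k) g m)"

definition good :: "nat \<Rightarrow> nat \<Rightarrow> ((nat \<Rightarrow> nat) \<Rightarrow> complex) \<Rightarrow> bool" where
  "good n D g \<longleftrightarrow> is_mpoly n g \<and> (\<forall>e. g e \<noteq> 0 \<longrightarrow> (\<forall>i. e i \<le> D))"

lemma partial_nz: "mpoly_partial n e g m \<noteq> 0 \<Longrightarrow> g (\<lambda>i. m i + e i) \<noteq> 0"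
  unfolding mpoly_partial_def by (metis mult_zero_left)

lemma supp_partial_sub: "{m. mpoly_partial n e g m \<noteq> 0} \<subseteq> (\<lambda>m i. m i - e i) ` {m. g m \<noteq> 0}"
proof
  fix m assume "m \<in> {m. mpoly_partial n e g m \<noteq> 0}"
  then have "g (\<lambda>i. m i + e i) \<noteq> 0" using partial_nz[of n e g m] by simp
  then show "m \<in> (\<lambda>m i. m i - e i) ` {m. g m \<noteq> 0}"
    by (intro image_eqI[where x="\<lambda>i. m i + e i"]) auto
qed

lemma finite_supp_partial: "finite {m. g m \<noteq> 0} \<Longrightarrow> finite {m. mpoly_partial n e g m \<noteq> 0}"
  by (rule finite_subset[OF supp_partial_sub]) simp

lemma eval_superset:
  assumes "finite F" "{e. g e \<noteq> 0} \<subseteq> F"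
  shows "mpoly_eval n g y = (\<Sum>e\<in>F. g e * (\<Prod>i<n. y i ^ e i))"
  unfolding mpoly_eval_def
  by (rule sum.mono_neutral_left) (use assms in auto)

lemma eval_lincomb:
  assumes K: "finite K" and fin: "\<And>k. k \<in> K \<Longrightarrow> finite {m. h k m \<noteq> 0}"
  shows "mpoly_eval n (\<lambda>m. \<Sum>k\<in>K. a k * h k m) y = (\<Sum>k\<in>K. a k * mpoly_eval n (h k) y)"
proof -
  define F where "F = (\<Union>k\<in>K. {m. h k m \<noteq> 0})"
  have fF: "finite F" using K fin unfolding F_def by auto
  have s1: "{m. (\<Sum>k\<in>K. a k * h k m) \<noteq> 0} \<subseteq> F"
  proof
    fix m assume "m \<in> {m. (\<Sum>k\<in>K. a k * h k m) \<noteq> 0}"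
    then obtain k where "k \<in> K" "a k * h k m \<noteq> 0" by (metis (mono_tags, lifting) mem_Collect_eq sum.neutral)
    then show "m \<in> F" unfolding F_def by auto
  qed
  have "mpoly_eval n (\<lambda>m. \<Sum>k\<in>K. a k * h k m) y = (\<Sum>m\<in>F. (\<Sum>k\<in>K. a k * h k m) * (\<Prod>i<n. y i ^ m i))"
    by (rule eval_superset[OF fF s1])
  also have "\<dots> = (\<Sum>k\<in>K. a k * (\<Sum>m\<in>F. h k m * (\<Prod>i<n. y i ^ m i)))"
    by (simp add: sum_distrib_right sum_distrib_left mult.assoc sum.swap[of _ F])
  also have "\<dots> = (\<Sum>k\<in>K. a k * mpoly_eval n (h k) y)"
    by (rule sum.cong[OF refl], subst eval_superset[OF fF]) (auto simp: F_def)
  finally show ?thesis .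
qed

lemma prod_dlt:
  assumes "j < n"
  shows "(\<Prod>i<n. of_nat (fact (m i + dlt j k i)) / of_nat (fact (m i)) :: complex)
         = fact (m j + k) / fact (m j)"
proof -
  have "(\<Prod>i<n. of_nat (fact (m i + dlt j k i)) / of_nat (fact (m i)) :: complex)
       = (\<Prod>i<n. if i = j then fact (m j + k) / fact (m j) else 1)"
    by (rule prod.cong) (auto simp: dlt_def)
  also have "\<dots> = fact (m j + k) / fact (m j)" using assms by (subst prod.delta) auto
  finally show ?thesis .
qed

lemma eval_partial_dlt:
  assumes j: "j < n"
  shows "mpoly_eval n (mpoly_partial n (dlt j k) g) y =
    (\<Sum>e\<in>{e. g e \<noteq> 0 \<and> k \<le> e j}. g e * (fact (e j) / fact (e j - k)) * (\<Prod>i<n. y i ^ (e i - dlt j k i)))"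
  unfolding mpoly_eval_def
proof (rule sum.reindex_bij_witness[where i = "\<lambda>e i. e i - dlt j k i" and j = "\<lambda>m i. m i + dlt j k i"])
  fix e assume e: "e \<in> {e. g e \<noteq> 0 \<and> k \<le> e j}"
  show "(\<lambda>i. (\<lambda>i. e i - dlt j k i) i + dlt j k i) = e"
    using e by (auto simp: dlt_def)
  have eq: "(\<lambda>i. (e i - dlt j k i) + dlt j k i) = e" using e by (auto simp: dlt_def)
  have pd: "mpoly_partial n (dlt j k) g (\<lambda>i. e i - dlt j k i) = g e * (fact (e j) / fact (e j - k))"
  proof -
    have "mpoly_partial n (dlt j k) g (\<lambda>i. e i - dlt j k i) = g (\<lambda>i. (e i - dlt j k i) + dlt j k i) * (fact ((e j - dlt j k j) + k) / fact (e j - dlt j k j))"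
      unfolding mpoly_partial_def by (subst prod_dlt[OF j]) (rule refl)
    then show ?thesis using e by (simp add: eq dlt_def)
  qed
  show "(\<lambda>i. e i - dlt j k i) \<in> {m. mpoly_partial n (dlt j k) g m \<noteq> 0}"
    using e pd by simp
next
  fix m assume m: "m \<in> {m. mpoly_partial n (dlt j k) g m \<noteq> 0}"
  show "(\<lambda>i. (\<lambda>i. m i + dlt j k i) i - dlt j k i) = m" by auto
  show "(\<lambda>i. m i + dlt j k i) \<in> {e. g e \<noteq> 0 \<and> k \<le> e j}"
    using m partial_nz[of n "dlt j k" g m] by (auto simp: dlt_def)
  have pd: "mpoly_partial n (dlt j k) g m = g (\<lambda>i. m i + dlt j k i) * (fact (m j + k) / fact (m j))"
    unfolding mpoly_partial_def by (subst prod_dlt[OF j]) (rule refl)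
  show "g (\<lambda>i. m i + dlt j k i) * (fact ((\<lambda>i. m i + dlt j k i) j) / fact ((\<lambda>i. m i + dlt j k i) j - k)) *
          (\<Prod>i<n. y i ^ ((\<lambda>i. m i + dlt j k i) i - dlt j k i)) =
        mpoly_partial n (dlt j k) g m * (\<Prod>i<n. y i ^ m i)"
    unfolding pd by (simp add: dlt_def)
qed


lemma taylor_term:
  fixes c t :: complex and y :: "nat \<Rightarrow> complex"
  assumes j: "j < n" and eD: "e j \<le> D"
  shows "(\<Sum>k\<le>D. (t ^ k / fact k) * (if k \<le> e j then c * (fact (e j) / fact (e j - k)) * (\<Prod>i<n. y i ^ (e i - dlt j k i)) else 0))
     = c * (\<Prod>i<n. (y(j := y j + t)) i ^ e i)"
proof -
  define R where "R = (\<Prod>i\<in>{..<n} - {j}. y i ^ e i)"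
  have mono: "(\<Prod>i<n. y i ^ (e i - dlt j k i)) = y j ^ (e j - k) * R" for k
  proof -
    have "(\<Prod>i<n. y i ^ (e i - dlt j k i)) = y j ^ (e j - dlt j k j) * (\<Prod>i\<in>{..<n} - {j}. y i ^ (e i - dlt j k i))"
      using j by (subst prod.remove[of _ j]) auto
    also have "(\<Prod>i\<in>{..<n} - {j}. y i ^ (e i - dlt j k i)) = R"
      unfolding R_def by (rule prod.cong) (auto simp: dlt_def)
    finally show ?thesis by (simp add: dlt_def)
  qed
  have mono2: "(\<Prod>i<n. (y(j := y j + t)) i ^ e i) = (y j + t) ^ e j * R"
  proof -
    have "(\<Prod>i<n. (y(j := y j + t)) i ^ e i) = (y(j := y j + t)) j ^ e j * (\<Prod>i\<in>{..<n} - {j}. (y(j := y j + t)) i ^ e i)"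
      using j by (subst prod.remove[of _ j]) auto
    also have "(\<Prod>i\<in>{..<n} - {j}. (y(j := y j + t)) i ^ e i) = R"
      unfolding R_def by (rule prod.cong) auto
    finally show ?thesis by simp
  qed
  have "(\<Sum>k\<le>D. (t ^ k / fact k) * (if k \<le> e j then c * (fact (e j) / fact (e j - k)) * (\<Prod>i<n. y i ^ (e i - dlt j k i)) else 0))
      = (\<Sum>k\<in>{k\<in>{..D}. k \<le> e j}. (t ^ k / fact k) * (c * (fact (e j) / fact (e j - k)) * (y j ^ (e j - k) * R)))"
    by (subst sum.inter_filter) (auto simp: mono intro!: sum.cong)
  also have "{k\<in>{..D}. k \<le> e j} = {..e j}" using eD by auto
  also have "(\<Sum>k\<le>e j. (t ^ k / fact k) * (c * (fact (e j) / fact (e j - k)) * (y j ^ (e j - k) * R)))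
      = (\<Sum>k\<le>e j. c * R * (of_nat (e j choose k) * t ^ k * y j ^ (e j - k)))"
  proof (rule sum.cong[OF refl])
    fix k assume "k \<in> {..e j}"
    then have "k \<le> e j" by simp
    then show "(t ^ k / fact k) * (c * (fact (e j) / fact (e j - k)) * (y j ^ (e j - k) * R))
       = c * R * (of_nat (e j choose k) * t ^ k * y j ^ (e j - k))"
    proof -
      have b: "(of_nat (e j choose k) :: complex) = fact (e j) / (fact k * fact (e j - k))"
        by (rule binomial_fact) fact
      show ?thesis unfolding b by (simp add: field_simps)
    qed
  qed
  also have "\<dots> = c * R * (t + y j) ^ e j"
    by (simp add: binomial_ring sum_distrib_left)
  finally have X: "(\<Sum>k\<le>D. (t ^ k / fact k) * (if k \<le> e j then c * (fact (e j) / fact (e j - k)) * (\<Prod>i<n. y i ^ (e i - dlt j k i)) else 0)) = c * R * (t + y j) ^ e j" .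
  show ?thesis unfolding mono2 X by (simp add: ac_simps)
qed

lemma good_fin: "good n D g \<Longrightarrow> finite {e. g e \<noteq> 0}"
  unfolding good_def is_mpoly_def by simp

lemma taylor:
  assumes j: "j < n" and gd: "good n D g"
  shows "mpoly_eval n (Tj n D j t g) y = mpoly_eval n g (y(j := y j + t))"
proof -
  have fin: "finite {e. g e \<noteq> 0}" using good_fin[OF gd] .
  have "mpoly_eval n (Tj n D j t g) y = (\<Sum>k\<le>D. (t ^ k / fact k) * mpoly_eval n (mpoly_partial n (dlt j k) g) y)"
    unfolding Tj_def by (rule eval_lincomb) (auto intro: finite_supp_partial[OF fin])
  also have "\<dots> = (\<Sum>k\<le>D. (t ^ k / fact k) * (\<Sum>e\<in>{e. g e \<noteq> 0}. (if k \<le> e j then g e * (fact (e j) / fact (e j - k)) * (\<Prod>i<n. y i ^ (e i - dlt j k i)) else 0)))"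
    by (simp add: eval_partial_dlt[OF j] sum.inter_filter[OF fin, symmetric] conj_commute)
  also have "\<dots> = (\<Sum>e\<in>{e. g e \<noteq> 0}. (\<Sum>k\<le>D. (t ^ k / fact k) * (if k \<le> e j then g e * (fact (e j) / fact (e j - k)) * (\<Prod>i<n. y i ^ (e i - dlt j k i)) else 0)))"
    by (simp add: sum_distrib_left sum.swap[of _ "{..D}"])
  also have "\<dots> = (\<Sum>e\<in>{e. g e \<noteq> 0}. g e * (\<Prod>i<n. (y(j := y j + t)) i ^ e i))"
    by (rule sum.cong[OF refl], rule taylor_term[OF j]) (use gd in \<open>auto simp: good_def\<close>)
  also have "\<dots> = mpoly_eval n g (y(j := y j + t))" unfolding mpoly_eval_def ..
  finally show ?thesis .
qed


lemma supp_Tj: "Tj n D j t g m \<noteq> 0 \<Longrightarrow> \<exists>k\<le>D. mpoly_partial n (dlt j k) g m \<noteq> 0"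
proof (rule ccontr)
  assume a: "Tj n D j t g m \<noteq> 0" "\<not> (\<exists>k\<le>D. mpoly_partial n (dlt j k) g m \<noteq> 0)"
  then have "Tj n D j t g m = 0" unfolding Tj_def by (intro sum.neutral) auto
  with a show False by simp
qed

lemma good_Tj:
  assumes gd: "good n D g"
  shows "good n D (Tj n D j t g)"
proof -
  have fin: "finite {e. g e \<noteq> 0}" using good_fin[OF gd] .
  have "{m. Tj n D j t g m \<noteq> 0} \<subseteq> (\<Union>k\<in>{..D}. {m. mpoly_partial n (dlt j k) g m \<noteq> 0})"
  proof
    fix m assume "m \<in> {m. Tj n D j t g m \<noteq> 0}"
    then obtain k where k: "k \<le> D" "mpoly_partial n (dlt j k) g m \<noteq> 0" using supp_Tj[of n D j t g m] by auto
    then show "m \<in> (\<Union>k\<in>{..D}. {m. mpoly_partial n (dlt j k) g m \<noteq> 0})" by auto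
  qed
  moreover have "finite (\<Union>k\<in>{..D}. {m. mpoly_partial n (dlt j k) g m \<noteq> 0})"
    using finite_supp_partial[OF fin] by auto
  ultimately have f1: "finite {m. Tj n D j t g m \<noteq> 0}" by (rule finite_subset)
  have f2: "(\<forall>i\<ge>n. m i = 0) \<and> (\<forall>i. m i \<le> D)" if "Tj n D j t g m \<noteq> 0" for m
  proof -
    from supp_Tj[OF that] obtain k where "mpoly_partial n (dlt j k) g m \<noteq> 0" by blast
    then have "g (\<lambda>i. m i + dlt j k i) \<noteq> 0" by (rule partial_nz)
    then have "(\<forall>i\<ge>n. m i + dlt j k i = 0) \<and> (\<forall>i. m i + dlt j k i \<le> D)"
      using gd unfolding good_def is_mpoly_def by blast
    then show ?thesis by (meson add_eq_0_iff_both_eq_0 le_add1 le_trans)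
  qed
  show ?thesis unfolding good_def is_mpoly_def using f1 f2 by simp
qed

lemma fold_eval:
  assumes "distinct js" "set js \<subseteq> {..<n}" "good n D g"
  shows "good n D (foldr (\<lambda>j. Tj n D j (x j)) js g) \<and>
    (\<forall>y. mpoly_eval n (foldr (\<lambda>j. Tj n D j (x j)) js g) y = mpoly_eval n g (\<lambda>i. if i \<in> set js then y i + x i else y i))"
  using assms
proof (induction js)
  case Nil
  then show ?case by simp
next
  case (Cons j js)
  let ?h = "foldr (\<lambda>j. Tj n D j (x j)) js g"
  from Cons have IH: "good n D ?h" "\<And>y. mpoly_eval n ?h y = mpoly_eval n g (\<lambda>i. if i \<in> set js then y i + x i else y i)"
    by auto
  have j: "j < n" "j \<notin> set js" using Cons.prems by auto
  have "mpoly_eval n (Tj n D j (x j) ?h) y = mpoly_eval n g (\<lambda>i. if i \<in> set (j # js) then y i + x i else y i)" for y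
  proof -
    have "mpoly_eval n (Tj n D j (x j) ?h) y = mpoly_eval n ?h (y(j := y j + x j))"
      by (rule taylor[OF j(1) IH(1)])
    also have "\<dots> = mpoly_eval n g (\<lambda>i. if i \<in> set js then (y(j := y j + x j)) i + x i else (y(j := y j + x j)) i)"
      by (rule IH(2))
    also have "(\<lambda>i. if i \<in> set js then (y(j := y j + x j)) i + x i else (y(j := y j + x j)) i)
       = (\<lambda>i. if i \<in> set (j # js) then y i + x i else y i)"
      using j(2) by auto
    finally show ?thesis .
  qed
  then show ?case using good_Tj[OF IH(1)] by simp
qed

lemma eval_zero:
  assumes "is_mpoly n h"
  shows "mpoly_eval n h (\<lambda>_. 0) = h (\<lambda>_. 0)"
proof -
  have "mpoly_eval n h (\<lambda>_. 0) = (\<Sum>e\<in>{e. h e \<noteq> 0}. if e = (\<lambda>_. 0) then h e else 0)"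
    unfolding mpoly_eval_def
  proof (rule sum.cong[OF refl])
    fix e assume e: "e \<in> {e. h e \<noteq> 0}"
    show "h e * (\<Prod>i<n. (0::complex) ^ e i) = (if e = (\<lambda>_. 0) then h e else 0)"
    proof (cases "\<forall>i<n. e i = 0")
      case True
      have "\<forall>i\<ge>n. e i = 0" using e assms unfolding is_mpoly_def by simp
      then have "e = (\<lambda>_. 0)" using True by (intro ext) (metis not_le)
      then show ?thesis by simp
    next
      case False
      then obtain i where "i < n" "e i \<noteq> 0" by blast
      then have p0: "(\<Prod>i<n. (0::complex) ^ e i) = 0" by (intro prod_zero) auto
      have "e \<noteq> (\<lambda>_. 0)" using \<open>e i \<noteq> 0\<close> by metis
      then show ?thesis by (simp only: p0 if_False mult_zero_right)
    qed
  qed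
  also have "\<dots> = h (\<lambda>_. 0)"
    using assms unfolding is_mpoly_def by (simp add: sum.delta')
  finally show ?thesis .
qed



lemma cscale_vs: "vector_space cscale"
  by unfold_locales (auto simp: cscale_def algebra_simps)

interpretation cs: vector_space cscale by (rule cscale_vs)

lemma cscale_apply: "cscale a g m = a * g m" by (simp add: cscale_def)

lemma partial_add: "mpoly_partial n e (g + h) = mpoly_partial n e g + mpoly_partial n e h"
  by (rule ext) (simp add: mpoly_partial_def algebra_simps)

lemma partial_scale: "mpoly_partial n e (cscale a g) = cscale a (mpoly_partial n e g)"
  by (rule ext) (simp add: mpoly_partial_def cscale_def algebra_simps)

lemma partial_zero: "mpoly_partial n e 0 = 0"
  by (rule ext) (simp add: mpoly_partial_def)

lemma partial_id: "mpoly_partial n (\<lambda>_. 0) g = g"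
  by (rule ext) (simp add: mpoly_partial_def)

lemma partial_comp: "mpoly_partial n e (mpoly_partial n e' g) = mpoly_partial n (\<lambda>i. e i + e' i) g"
proof (rule ext)
  fix m
  have "(\<Prod>i<n. of_nat (fact (m i + (e i + e' i))) / of_nat (fact (m i)) :: complex)
      = (\<Prod>i<n. (of_nat (fact (m i + e i + e' i)) / of_nat (fact (m i + e i))) * (of_nat (fact (m i + e i)) / of_nat (fact (m i))) :: complex)"
    by (rule prod.cong) (simp_all add: add.assoc)
  also have "\<dots> = (\<Prod>i<n. of_nat (fact (m i + e i + e' i)) / of_nat (fact (m i + e i)) :: complex) * (\<Prod>i<n. of_nat (fact (m i + e i)) / of_nat (fact (m i)) :: complex)"
    by (rule prod.distrib)
  finally show "mpoly_partial n e (mpoly_partial n e' g) m = mpoly_partial n (\<lambda>i. e i + e' i) g m"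
    unfolding mpoly_partial_def by (simp add: add.assoc)
qed

definition Lk :: "nat \<Rightarrow> nat \<Rightarrow> nat \<Rightarrow> ((nat \<Rightarrow> nat) \<Rightarrow> complex) \<Rightarrow> ((nat \<Rightarrow> nat) \<Rightarrow> complex)" where
  "Lk n j k g = cscale (1 / fact k) (mpoly_partial n (dlt j k) g)"

lemma Lk_comm: "Lk n j k (Lk n j' k' g) = Lk n j' k' (Lk n j k g)"
  unfolding Lk_def partial_scale partial_comp
  by (simp add: cscale_def add.commute mult.commute mult.left_commute)

lemma Lk_add: "Lk n j k (g + h) = Lk n j k g + Lk n j k h"
  unfolding Lk_def partial_add by (rule ext) (simp add: cscale_def algebra_simps)

lemma Lk_scale: "Lk n j k (cscale a g) = cscale a (Lk n j k g)"
  unfolding Lk_def partial_scale by (rule ext) (simp add: cscale_def algebra_simps)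

lemma Tj_sum: "Tj n D j t g = (\<Sum>k\<le>D. cscale (t ^ k) (Lk n j k g))"
  by (rule ext) (simp add: Tj_def Lk_def sum_fun_app cscale_def)

lemma lin_sum:
  assumes add: "\<And>g h. L (g + h) = L g + L h" and sc: "\<And>a g. L (cscale a g) = cscale a (L g)"
  shows "L (\<Sum>i\<in>I. cscale (c i) (v i)) = (\<Sum>i\<in>I. cscale (c i) (L (v i)))"
proof (induction I rule: infinite_finite_induct)
  case (infinite A)
  have "L 0 = 0" using sc[of 0 0] by (simp add: cscale_def zero_fun_def)
  then show ?case using infinite by (metis sum.infinite)
next
  case empty
  have "L 0 = 0" using sc[of 0 0] by (simp add: cscale_def zero_fun_def)
  then show ?case by (metis sum.empty)
next
  case (insert x F)
  have e1: "(\<Sum>i\<in>insert x F. cscale (c i) (v i)) = cscale (c x) (v x) + (\<Sum>i\<in>F. cscale (c i) (v i))"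
    by (rule sum.insert[OF insert(1,2)])
  have e2: "(\<Sum>i\<in>insert x F. cscale (c i) (L (v i))) = cscale (c x) (L (v x)) + (\<Sum>i\<in>F. cscale (c i) (L (v i)))"
    by (rule sum.insert[OF insert(1,2)])
  show ?case unfolding e1 e2 add sc insert.IH ..
qed


locale bsetup =
  fixes B :: "((nat \<Rightarrow> nat) \<Rightarrow> complex) set" and \<phi> :: "nat \<Rightarrow> ((nat \<Rightarrow> nat) \<Rightarrow> complex)" and s :: nat
  assumes indep: "cs.independent B" and bij: "bij_betw \<phi> {0..<s} B"
begin

definition coord where "coord g = vec s (\<lambda>a. cs.representation B g (\<phi> a))"

definition matL where "matL L = mat s s (\<lambda>(a, c). coord (L (\<phi> c)) $ a)"

lemma finB: "finite B" using bij bij_betw_finite by blast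

lemma phiB: "c < s \<Longrightarrow> \<phi> c \<in> B" using bij unfolding bij_betw_def by auto

lemma phi_span: "c < s \<Longrightarrow> \<phi> c \<in> cs.span B" using phiB cs.span_base by blast

lemma coord_carrier: "coord g \<in> carrier_vec s" unfolding coord_def by simp

lemma coord_idx: "a < s \<Longrightarrow> coord g $ a = cs.representation B g (\<phi> a)"
  unfolding coord_def by simp

lemma expand:
  assumes "g \<in> cs.span B"
  shows "(\<Sum>c\<in>{0..<s}. cscale (cs.representation B g (\<phi> c)) (\<phi> c)) = g"
proof -
  have "(\<Sum>c\<in>{0..<s}. cscale (cs.representation B g (\<phi> c)) (\<phi> c)) = (\<Sum>b\<in>B. cscale (cs.representation B g b) b)"
    by (rule sum.reindex_bij_betw[OF bij])
  also have "\<dots> = g" by (rule cs.sum_representation_eq[OF indep assms finB subset_refl])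
  finally show ?thesis .
qed

lemma rep_lin:
  assumes "\<And>c. c \<in> I \<Longrightarrow> v c \<in> cs.span B"
  shows "cs.representation B (\<Sum>c\<in>I. cscale (a c) (v c)) b = (\<Sum>c\<in>I. a c * cs.representation B (v c) b)"
proof -
  have "cs.representation B (\<Sum>c\<in>I. cscale (a c) (v c)) = (\<lambda>b. \<Sum>c\<in>I. cs.representation B (cscale (a c) (v c)) b)"
    by (rule cs.representation_sum[OF indep]) (use assms cs.span_scale in blast)
  then show ?thesis using cs.representation_scale[OF indep assms] by simp
qed

lemma matvec_idx:
  assumes "a < s" "v \<in> carrier_vec s"
  shows "(mat s s F *\<^sub>v v) $ a = (\<Sum>c\<in>{0..<s}. F (a, c) * v $ c)"
  using assms by (simp add: index_mult_mat_vec row_mat scalar_prod_def)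

lemma K:
  assumes add: "\<And>g h. L (g + h) = L g + L h" and sc: "\<And>a g. L (cscale a g) = cscale a (L g)"
    and cl: "\<And>g. g \<in> cs.span B \<Longrightarrow> L g \<in> cs.span B"
    and g: "g \<in> cs.span B"
  shows "matL L *\<^sub>v coord g = coord (L g)"
proof (rule eq_vecI)
  show "dim_vec (matL L *\<^sub>v coord g) = dim_vec (coord (L g))"
    by (simp add: matL_def coord_def)
  fix a assume "a < dim_vec (coord (L g))"
  then have a: "a < s" by (simp add: coord_def)
  have "(matL L *\<^sub>v coord g) $ a = (\<Sum>c\<in>{0..<s}. coord (L (\<phi> c)) $ a * coord g $ c)"
    unfolding matL_def by (subst matvec_idx[OF a coord_carrier]) simp
  also have "\<dots> = (\<Sum>c\<in>{0..<s}. cs.representation B g (\<phi> c) * cs.representation B (L (\<phi> c)) (\<phi> a))"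
    using a by (simp add: coord_idx mult.commute)
  also have "\<dots> = cs.representation B (\<Sum>c\<in>{0..<s}. cscale (cs.representation B g (\<phi> c)) (L (\<phi> c))) (\<phi> a)"
    by (rule rep_lin[symmetric]) (auto intro: cl phi_span)
  also have "(\<Sum>c\<in>{0..<s}. cscale (cs.representation B g (\<phi> c)) (L (\<phi> c))) = L g"
    using lin_sum[OF add sc, of "\<lambda>c. cs.representation B g (\<phi> c)" \<phi> "{0..<s}"] expand[OF g] by simp
  finally show "(matL L *\<^sub>v coord g) $ a = coord (L g) $ a" using a by (simp add: coord_idx)
qed

lemma matL_carrier: "matL L \<in> carrier_mat s s" unfolding matL_def by simp

lemma matL_mult:
  assumes add: "\<And>g h. L (g + h) = L g + L h" and sc: "\<And>a g. L (cscale a g) = cscale a (L g)"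
    and cl: "\<And>g. g \<in> cs.span B \<Longrightarrow> L g \<in> cs.span B"
    and cl2: "\<And>g. g \<in> cs.span B \<Longrightarrow> L2 g \<in> cs.span B"
  shows "matL L * matL L2 = matL (\<lambda>g. L (L2 g))"
proof (rule eq_matI)
  fix a c assume "a < dim_row (matL (\<lambda>g. L (L2 g)))" "c < dim_col (matL (\<lambda>g. L (L2 g)))"
  then have a: "a < s" and c: "c < s" by (auto simp: matL_def)
  have col: "col (matL L2) c = coord (L2 (\<phi> c))"
    by (rule eq_vecI) (use c in \<open>auto simp: matL_def col_mat coord_def\<close>)
  have "(matL L * matL L2) $$ (a, c) = row (matL L) a \<bullet> col (matL L2) c"
    by (rule index_mult_mat(1)) (use a c in \<open>auto simp: matL_def\<close>)
  also have "\<dots> = row (matL L) a \<bullet> coord (L2 (\<phi> c))" by (simp only: col)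
  also have "\<dots> = (matL L *\<^sub>v coord (L2 (\<phi> c))) $ a"
    using a by (simp add: matL_def index_mult_mat_vec)
  also have "\<dots> = coord (L (L2 (\<phi> c))) $ a"
    by (subst K[OF add sc cl]) (auto intro: cl2 phi_span c)
  also have "\<dots> = matL (\<lambda>g. L (L2 g)) $$ (a, c)"
    using a c by (simp add: matL_def)
  finally show "(matL L * matL L2) $$ (a, c) = matL (\<lambda>g. L (L2 g)) $$ (a, c)" .
qed (auto simp: matL_def)


lemma value_lemma:
  assumes h: "h \<in> cs.span B"
  shows "vec s (\<lambda>a. \<phi> a z) \<bullet> coord h = h z"
proof -
  have "vec s (\<lambda>a. \<phi> a z) \<bullet> coord h = (\<Sum>a\<in>{0..<s}. cs.representation B h (\<phi> a) * \<phi> a z)"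
    unfolding scalar_prod_def by (simp add: coord_def mult.commute)
  also have "\<dots> = (\<Sum>a\<in>{0..<s}. cscale (cs.representation B h (\<phi> a)) (\<phi> a)) z"
    by (simp add: sum_fun_app cscale_apply)
  also have "\<dots> = h z" using expand[OF h] by simp
  finally show ?thesis .
qed

context
  fixes n :: nat
  assumes clos: "\<And>g j k. g \<in> cs.span B \<Longrightarrow> j < n \<Longrightarrow> mpoly_partial n (dlt j k) g \<in> cs.span B"
begin

lemma Lk_span: "g \<in> cs.span B \<Longrightarrow> j < n \<Longrightarrow> Lk n j k g \<in> cs.span B"
  unfolding Lk_def by (intro cs.span_scale clos)

lemma Tj_span: "g \<in> cs.span B \<Longrightarrow> j < n \<Longrightarrow> Tj n D j t g \<in> cs.span B"
  unfolding Tj_sum by (intro cs.span_sum cs.span_scale Lk_span)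

lemma layer:
  assumes j: "j < n" and g: "g \<in> cs.span B"
  shows "roabp_layer s D (\<lambda>j k. matL (Lk n j k)) j t *\<^sub>v coord g = coord (Tj n D j t g)"
proof (rule eq_vecI)
  show "dim_vec (roabp_layer s D (\<lambda>j k. matL (Lk n j k)) j t *\<^sub>v coord g) = dim_vec (coord (Tj n D j t g))"
    by (simp add: roabp_layer_def coord_def)
  fix a assume "a < dim_vec (coord (Tj n D j t g))"
  then have a: "a < s" by (simp add: coord_def)
  have KK: "matL (Lk n j k) *\<^sub>v coord g = coord (Lk n j k g)" for k
    by (rule K) (auto simp: Lk_add Lk_scale intro: Lk_span j g)
  have "(roabp_layer s D (\<lambda>j k. matL (Lk n j k)) j t *\<^sub>v coord g) $ a
      = (\<Sum>c\<in>{0..<s}. (\<Sum>k\<le>D. matL (Lk n j k) $$ (a, c) * t ^ k) * coord g $ c)"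
    unfolding roabp_layer_def by (subst matvec_idx[OF a coord_carrier]) simp
  also have "\<dots> = (\<Sum>k\<le>D. t ^ k * (\<Sum>c\<in>{0..<s}. matL (Lk n j k) $$ (a, c) * coord g $ c))"
    by (simp add: sum_distrib_left sum_distrib_right sum.swap[of _ "{..D}"] mult_ac)
  also have "\<dots> = (\<Sum>k\<le>D. t ^ k * (matL (Lk n j k) *\<^sub>v coord g) $ a)"
  proof (rule sum.cong[OF refl])
    fix k
    have "(matL (Lk n j k) *\<^sub>v coord g) $ a = (\<Sum>c\<in>{0..<s}. coord (Lk n j k (\<phi> c)) $ a * coord g $ c)"
      unfolding matL_def by (subst matvec_idx[OF a coord_carrier]) simp
    moreover have "(\<Sum>c\<in>{0..<s}. matL (Lk n j k) $$ (a, c) * coord g $ c) = (\<Sum>c\<in>{0..<s}. coord (Lk n j k (\<phi> c)) $ a * coord g $ c)"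
      using a by (intro sum.cong) (auto simp: matL_def)
    ultimately show "t ^ k * (\<Sum>c\<in>{0..<s}. matL (Lk n j k) $$ (a, c) * coord g $ c) = t ^ k * (matL (Lk n j k) *\<^sub>v coord g) $ a"
      by simp
  qed
  also have "\<dots> = (\<Sum>k\<le>D. t ^ k * cs.representation B (Lk n j k g) (\<phi> a))"
    by (simp add: KK coord_idx a)
  also have "\<dots> = cs.representation B (\<Sum>k\<le>D. cscale (t ^ k) (Lk n j k g)) (\<phi> a)"
    by (rule rep_lin[symmetric]) (auto intro: Lk_span j g)
  also have "\<dots> = coord (Tj n D j t g) $ a"
    by (simp add: coord_idx a Tj_sum)
  finally show "(roabp_layer s D (\<lambda>j k. matL (Lk n j k)) j t *\<^sub>v coord g) $ a = coord (Tj n D j t g) $ a" .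
qed

lemma fold_layer:
  assumes "set js \<subseteq> {..<n}" "g \<in> cs.span B"
  shows "foldr (*) (map (\<lambda>i. roabp_layer s D (\<lambda>j k. matL (Lk n j k)) i (x i)) js) (1\<^sub>m s) \<in> carrier_mat s s
    \<and> foldr (\<lambda>j. Tj n D j (x j)) js g \<in> cs.span B
    \<and> foldr (*) (map (\<lambda>i. roabp_layer s D (\<lambda>j k. matL (Lk n j k)) i (x i)) js) (1\<^sub>m s) *\<^sub>v coord g
       = coord (foldr (\<lambda>j. Tj n D j (x j)) js g)"
  using assms
proof (induction js)
  case Nil
  then show ?case by (simp add: coord_carrier)
next
  case (Cons j js)
  let ?P = "foldr (*) (map (\<lambda>i. roabp_layer s D (\<lambda>j k. matL (Lk n j k)) i (x i)) js) (1\<^sub>m s)"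
  let ?h = "foldr (\<lambda>j. Tj n D j (x j)) js g"
  from Cons have IH: "?P \<in> carrier_mat s s" "?h \<in> cs.span B" "?P *\<^sub>v coord g = coord ?h" by auto
  have j: "j < n" using Cons.prems by auto
  have Lc: "roabp_layer s D (\<lambda>j k. matL (Lk n j k)) j (x j) \<in> carrier_mat s s"
    by (simp add: roabp_layer_def)
  have "roabp_layer s D (\<lambda>j k. matL (Lk n j k)) j (x j) * ?P *\<^sub>v coord g
     = roabp_layer s D (\<lambda>j k. matL (Lk n j k)) j (x j) *\<^sub>v (?P *\<^sub>v coord g)"
    by (rule assoc_mult_mat_vec[OF Lc IH(1) coord_carrier])
  also have "\<dots> = coord (Tj n D j (x j) ?h)" unfolding IH(3) by (rule layer[OF j IH(2)])
  finally show ?case using Lc IH(1) Tj_span[OF IH(2) j] by simp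
qed

end

end



theorem corollary1p5:
  fixes n d :: nat and f :: "(nat \<Rightarrow> nat) \<Rightarrow> complex"
  assumes "is_mpoly n f"
    and "total_degree n f = d"
  shows "commRO n f \<le> (d + 1)^2 * DPD n f"
proof -
  define S where "S = {mpoly_partial n e f | e. \<forall>i\<ge>n. e i = 0}"
  define D where "D = (\<Sum>e\<in>{e. f e \<noteq> 0}. \<Sum>i<n. e i)"
  have fin: "finite {e. f e \<noteq> 0}" using assms(1) unfolding is_mpoly_def by simp
  have gd: "good n D f"
    unfolding good_def
  proof (intro conjI allI impI assms(1))
    fix e i assume e: "f e \<noteq> 0"
    show "e i \<le> D"
    proof (cases "i < n")
      case True
      have "e i \<le> (\<Sum>i<n. e i)" by (rule member_le_sum) (use True in auto)
      also have "\<dots> \<le> D" unfolding D_def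
        by (rule member_le_sum[where f = "\<lambda>e. \<Sum>i<n. e i"]) (use e fin in auto)
      finally show ?thesis .
    next
      case False
      then have "e i = 0" using e assms(1) unfolding is_mpoly_def by simp
      then show ?thesis by simp
    qed
  qed
  define Box where "Box = {e::nat\<Rightarrow>nat. \<forall>i. (i \<in> {..<n} \<longrightarrow> e i \<in> {..D}) \<and> (i \<notin> {..<n} \<longrightarrow> e i = 0)}"
  have fBox: "finite Box" unfolding Box_def by (rule finite_set_of_finite_funs) auto
  have Ssub: "S \<subseteq> insert 0 ((\<lambda>e. mpoly_partial n e f) ` Box)"
  proof
    fix x assume "x \<in> S"
    then obtain e where x: "x = mpoly_partial n e f" and e: "\<forall>i\<ge>n. e i = 0" unfolding S_def by blast
    show "x \<in> insert 0 ((\<lambda>e. mpoly_partial n e f) ` Box)"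
    proof (cases "e \<in> Box")
      case True
      then show ?thesis using x by blast
    next
      case False
      then obtain i where i: "i < n" "e i > D" using e unfolding Box_def by (auto simp: not_le)
      have "x = 0"
      proof (rule ext)
        fix m
        show "x m = 0 m"
        proof (rule ccontr)
          assume "x m \<noteq> 0 m"
          then have "f (\<lambda>i. m i + e i) \<noteq> 0" using partial_nz[of n e f m] x by simp
          then have "m i + e i \<le> D" using gd unfolding good_def by blast
          then show False using i by simp
        qed
      qed
      then show ?thesis by simp
    qed
  qed
  have Sfin: "finite S" by (rule finite_subset[OF Ssub]) (use fBox in simp)
  have fS: "f \<in> S" unfolding S_def by (rule CollectI, rule exI[of _ "\<lambda>_. 0"]) (simp add: partial_id)
  have closS: "mpoly_partial n e g \<in> cs.span S" if g: "g \<in> cs.span S" and e: "\<forall>i\<ge>n. e i = 0" for g e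
    using g
  proof (induction rule: cs.span_induct_alt)
    case base
    show ?case by (metis partial_zero cs.span_zero)
  next
    case (step c x y)
    then obtain e' where x: "x = mpoly_partial n e' f" and e': "\<forall>i\<ge>n. e' i = 0" unfolding S_def by blast
    have "mpoly_partial n e x \<in> S" unfolding x partial_comp S_def using e e' by auto
    then have "mpoly_partial n e x \<in> cs.span S" by (rule cs.span_base)
    then show ?case unfolding partial_add partial_scale
      by (intro cs.span_add cs.span_scale step.IH)
  qed
  obtain B where B: "B \<subseteq> S" "cs.independent B" "S \<subseteq> cs.span B" "card B = cs.dim S"
    by (rule cs.basis_exists)
  have finB: "finite B" using B(1) Sfin finite_subset by blast
  obtain \<phi> where phi: "bij_betw \<phi> {0..<card B} B" using ex_bij_betw_nat_finite[OF finB] by blast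
  have spanBS: "cs.span B = cs.span S"
  proof
    show "cs.span B \<subseteq> cs.span S" by (rule cs.span_mono[OF B(1)])
    show "cs.span S \<subseteq> cs.span B" by (rule cs.span_minimal[OF B(3) cs.subspace_span])
  qed
  interpret bs: bsetup B \<phi> "card B" by unfold_locales (fact B(2), fact phi)
  have clos: "mpoly_partial n (dlt j k) g \<in> cs.span B" if "g \<in> cs.span B" "j < n" for g j k
    using closS[of g "dlt j k"] that unfolding spanBS by (auto simp: dlt_def)
  have fB: "f \<in> cs.span B" using fS B(3) by blast
  define s where "s = card B"
  define A where "A = (\<lambda>j k. bs.matL (Lk n j k))"
  have comp: "comm_roabp_computes n s f"
    unfolding comm_roabp_computes_def
  proof (intro exI conjI allI impI)
    show "id permutes {0..<n}" by (rule permutes_id)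
    show "A j k \<in> carrier_mat s s" for j k unfolding A_def s_def by (rule bs.matL_carrier)
    show "vec s (\<lambda>a. \<phi> a (\<lambda>_. 0)) \<in> carrier_vec s" by simp
    show "bs.coord f \<in> carrier_vec s" unfolding s_def by (rule bs.coord_carrier)
    fix j k j' k' assume j: "j < n" and j': "j' < n"
    have m1: "A j k * A j' k' = bs.matL (\<lambda>g. Lk n j k (Lk n j' k' g))"
      unfolding A_def by (rule bs.matL_mult) (auto simp: Lk_add Lk_scale intro: bs.Lk_span[OF clos] j j')
    have m2: "A j' k' * A j k = bs.matL (\<lambda>g. Lk n j' k' (Lk n j k g))"
      unfolding A_def by (rule bs.matL_mult) (auto simp: Lk_add Lk_scale intro: bs.Lk_span[OF clos] j j')
    show "A j k * A j' k' = A j' k' * A j k" unfolding m1 m2 Lk_comm ..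
  next
    fix x
    show "mpoly_eval n f x = roabp_value n s D id A (vec s (\<lambda>a. \<phi> a (\<lambda>_. 0))) (bs.coord f) x"
    proof -
      define h where "h = foldr (\<lambda>j. Tj n D j (x j)) [0..<n] f"
      have FL2: "foldr (*) (map (\<lambda>i. roabp_layer s D A i (x i)) [0..<n]) (1\<^sub>m s) *\<^sub>v bs.coord f = bs.coord h"
        "h \<in> cs.span B"
      proof -
        have sub: "set [0..<n] \<subseteq> {..<n}" by auto
        have X: "foldr (*) (map (\<lambda>i. roabp_layer s D A i (x i)) [0..<n]) (1\<^sub>m s) \<in> carrier_mat s s \<and> h \<in> cs.span B
           \<and> foldr (*) (map (\<lambda>i. roabp_layer s D A i (x i)) [0..<n]) (1\<^sub>m s) *\<^sub>v bs.coord f = bs.coord h"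
          unfolding h_def A_def s_def by (rule bs.fold_layer[of n]) (auto intro: clos fB)
        then show "foldr (*) (map (\<lambda>i. roabp_layer s D A i (x i)) [0..<n]) (1\<^sub>m s) *\<^sub>v bs.coord f = bs.coord h"
          "h \<in> cs.span B" by auto
      qed
      have FE: "good n D h" "\<And>y. mpoly_eval n h y = mpoly_eval n f (\<lambda>i. if i \<in> set [0..<n] then y i + x i else y i)"
      proof -
        have sub: "set [0..<n] \<subseteq> {..<n}" by auto
        have X: "good n D h \<and> (\<forall>y. mpoly_eval n h y = mpoly_eval n f (\<lambda>i. if i \<in> set [0..<n] then y i + x i else y i))"
          unfolding h_def by (rule fold_eval[OF distinct_upt sub gd])
        then show "good n D h" "\<And>y. mpoly_eval n h y = mpoly_eval n f (\<lambda>i. if i \<in> set [0..<n] then y i + x i else y i)"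
          by blast+
      qed
      have "roabp_value n s D id A (vec s (\<lambda>a. \<phi> a (\<lambda>_. 0))) (bs.coord f) x
          = vec s (\<lambda>a. \<phi> a (\<lambda>_. 0)) \<bullet> bs.coord h"
        unfolding roabp_value_def FL2(1)[symmetric] by simp
      also have "\<dots> = h (\<lambda>_. 0)" unfolding s_def by (rule bs.value_lemma[OF FL2(2)])
      also have "\<dots> = mpoly_eval n h (\<lambda>_. 0)"
        by (rule eval_zero[symmetric]) (use FE(1) in \<open>simp add: good_def\<close>)
      also have "\<dots> = mpoly_eval n f (\<lambda>i. if i \<in> set [0..<n] then 0 + x i else 0)" by (rule FE(2))
      also have "\<dots> = mpoly_eval n f x"
        unfolding mpoly_eval_def by (intro sum.cong refl arg_cong2[where f = "(*)"] prod.cong) auto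
      finally show ?thesis by simp
    qed
  qed
  have "commRO n f \<le> s" unfolding commRO_def by (rule Least_le[where P = "\<lambda>w. comm_roabp_computes n w f", OF comp])
  also have "s = DPD n f" unfolding s_def DPD_def B(4) S_def ..
  also have "DPD n f \<le> (d + 1)^2 * DPD n f" by simp
  finally show ?thesis .
qed

end
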